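(* Let $\mathfrak g$ be a six-dimensional nilpotent Lie algebra and $\rho\in\Lambda^3\mathfrak g^*$ a closed stable three-form, with dual three-form $\hat\rho$ (for either orientation). (i) If $\mathfrak g$ is one of $(0,0,0,0,e^{12},e^{34})$, $(0,0,0,0,e^{13}+e^{42},e^{14}+e^{23})$, $(0,0,0,0,e^{12},e^{14}+e^{23})$, then $d\hat\rho\in\Lambda^4U$, where $U$ is the four-dimensional kernel of $d:\Lambda^1\mathfrak g^*\to\Lambda^2\mathfrak g^*$. (ii) If $\mathfrak g$ is $(0,0,0,0,0,e^{12}+e^{34})$, then $d\hat\rho\in\Lambda^4U$ with $U=\mathrm{span}\{e^1,e^2,e^3,e^4\}$.
   Context: A nilpotent Lie algebra is specified by a list $(de^1,\dots,de^6)$: there is a basis $e^1,\dots,e^6$ of $\mathfrak g^*$ whose Chevalley–Eilenberg differentials are the listed two-forms ($e^{ij}=e^i\wedge e^j$); e.g. $(0,0,0,0,e^{12},e^{34})$ means $de^1=\dots=de^4=0$, $de^5=e^{12}$, $de^6=e^{34}$; $d$ extends to $\Lambda^\bullet\mathfrak g^*$ as a derivation. A three-form is stable if its ${\rm GL}$-orbit is open. For stable $\rho$ on oriented $\mathfrak g$: $K_\rho(v)=\kappa((v\lrcorner\rho)\wedge\rho)$ ($\kappa:\Lambda^5\cong V\otimes\Lambda^6$ canonical), $\lambda(\rho)=\frac16\mathrm{tr}K_\rho^2$, $\phi(\rho)=\sqrt{|\lambda(\rho)|}$, and $\hat\rho$ is defined by $d\phi_\rho(\beta)=\hat\rho\wedge\beta$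 for all three-forms $\beta$. *)

theory Defs
  imports "HOL-Analysis.Analysis"
begin

text \<open>Exterior algebra of the dual of a 6-dimensional real vector space with basis
 e^1,...,e^6 (indices 1..6).  A (mixed-degree) form is a function assigning to each
 set S of indices the coefficient of the monomial e^S = e^{s1} \<and> ... \<and> e^{sk}
 (s1 < ... < sk).\<close>

type_synonym form = "nat set \<Rightarrow> real"
type_synonym vec = "nat \<Rightarrow> real"

definition idx :: "nat set" where "idx = {1..6}"

definition forms :: "nat \<Rightarrow> form set" where
  "forms k = {\<omega>. \<forall>S. \<omega> S \<noteq> 0 \<longrightarrow> S \<subseteq> idx \<and> card S = k}"

definition mono :: "nat set \<Rightarrow> form" where
  "mono S = (\<lambda>T. if T = S then 1 else 0)"

definition e1 :: "nat \<Rightarrow> form" where "e1 i = mono {i}"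

definition zero_form :: form where "zero_form = (\<lambda>_. 0)"

definition sgn_shuffle :: "nat set \<Rightarrow> nat set \<Rightarrow> real" where
  "sgn_shuffle A B = (-1) ^ card {(i, j). i \<in> A \<and> j \<in> B \<and> j < i}"

definition wedge :: "form \<Rightarrow> form \<Rightarrow> form" where
  "wedge a b = (\<lambda>S. \<Sum>A\<in>Pow S. sgn_shuffle A (S - A) * a A * b (S - A))"

definition e2 :: "nat \<Rightarrow> nat \<Rightarrow> form" where "e2 i j = wedge (e1 i) (e1 j)"

fun wedge_list :: "form list \<Rightarrow> form" where
  "wedge_list [] = mono {}"
| "wedge_list (a # as) = wedge a (wedge_list as)"

definition top_coeff :: "form \<Rightarrow> real" where "top_coeff \<omega> = \<omega> idx"

text \<open>Chevalley--Eilenberg differential determined by the list de i (i = 1..6) of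
 two-forms, extended to all forms as a derivation.\<close>
definition d_mono :: "(nat \<Rightarrow> form) \<Rightarrow> nat set \<Rightarrow> form" where
  "d_mono de S = (\<lambda>T. \<Sum>i\<in>S. (-1) ^ card {j\<in>S. j < i} *
      wedge (mono {j\<in>S. j < i}) (wedge (de i) (mono {j\<in>S. i < j})) T)"

definition CE_d :: "(nat \<Rightarrow> form) \<Rightarrow> form \<Rightarrow> form" where
  "CE_d de \<omega> = (\<lambda>T. \<Sum>S\<in>Pow idx. \<omega> S * d_mono de S T)"

text \<open>Stability: the GL(g)-orbit of the three-form is open in \<Lambda>^3 g^*.
 A matrix A acts on one-forms by e^i \<mapsto> \<Sum>_j A i j e^j, extended multiplicatively.\<close>
definition invertible6 :: "(nat \<Rightarrow> nat \<Rightarrow> real) \<Rightarrow> bool" where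
  "invertible6 A \<longleftrightarrow> (\<exists>B. \<forall>i\<in>idx. \<forall>j\<in>idx.
      (\<Sum>k\<in>idx. A i k * B k j) = (if i = j then 1 else 0) \<and>
      (\<Sum>k\<in>idx. B i k * A k j) = (if i = j then 1 else 0))"

definition act1 :: "(nat \<Rightarrow> nat \<Rightarrow> real) \<Rightarrow> nat \<Rightarrow> form" where
  "act1 A i = (\<lambda>T. \<Sum>j\<in>idx. A i j * e1 j T)"

definition pullback :: "(nat \<Rightarrow> nat \<Rightarrow> real) \<Rightarrow> form \<Rightarrow> form" where
  "pullback A \<omega> = (\<lambda>T. \<Sum>S\<in>Pow idx. \<omega> S *
      wedge_list (map (act1 A) (sorted_list_of_set S)) T)"

definition stable :: "form \<Rightarrow> bool" where
  "stable \<rho> \<longleftrightarrow> \<rho> \<in> forms 3 \<and>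
     openin (top_of_set (forms 3)) {pullback A \<rho> | A. invertible6 A}"

definition interior :: "vec \<Rightarrow> form \<Rightarrow> form" where
  "interior v \<omega> = (\<lambda>S. \<Sum>i\<in>idx - S. v i * (-1) ^ card {j\<in>S. j < i} * \<omega> (insert i S))"

definition basis_vec :: "nat \<Rightarrow> vec" where
  "basis_vec j = (\<lambda>i. if i = j then 1 else 0)"

text \<open>\<kappa> : \<Lambda>^5 \<cong> V \<otimes> \<Lambda>^6, written w.r.t. the volume form e^{123456}:
 \<kappa>(\<omega>) = w \<otimes> e^{123456} with w \<lrcorner> e^{123456} = \<omega>.\<close>
definition kappa :: "form \<Rightarrow> vec" where
  "kappa \<omega> = (\<lambda>i. if i \<in> idx then (-1) ^ (i - 1) * \<omega> (idx - {i}) else 0)"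

definition K_mat :: "form \<Rightarrow> nat \<Rightarrow> nat \<Rightarrow> real" where
  "K_mat \<rho> i j = kappa (wedge (interior (basis_vec j) \<rho>) \<rho>) i"

definition lambda_inv :: "form \<Rightarrow> real" where
  "lambda_inv \<rho> = (1/6) * (\<Sum>i\<in>idx. \<Sum>j\<in>idx. K_mat \<rho> i j * K_mat \<rho> j i)"

text \<open>\<phi>(\<rho>) as a multiple of the volume form; the orientation sign ori \<in> {1,-1}
 indicates whether e^{123456} is positively (ori = 1) or negatively oriented.\<close>
definition phi :: "real \<Rightarrow> form \<Rightarrow> real" where
  "phi ori \<rho> = ori * sqrt \<bar>lambda_inv \<rho>\<bar>"

definition is_hat :: "real \<Rightarrow> form \<Rightarrow> form \<Rightarrow> bool" where
  "is_hat ori \<rho> \<rho>h \<longleftrightarrow> \<rho>h \<in> forms 3 \<and>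
     (\<forall>\<beta>\<in>forms 3. ((\<lambda>t. phi ori (\<lambda>S. \<rho> S + t * \<beta> S)) has_real_derivative
        top_coeff (wedge \<rho>h \<beta>)) (at 0))"

definition lam_sub :: "nat \<Rightarrow> form set \<Rightarrow> form set" where
  "lam_sub k U = {\<omega>. \<exists>(n::nat) c us. (\<forall>m<n. \<forall>l<k. us m l \<in> U) \<and>
      \<omega> = (\<lambda>T. \<Sum>m<n. c m * wedge_list (map (us m) [0..<k]) T)}"

definition ker_d1 :: "(nat \<Rightarrow> form) \<Rightarrow> form set" where
  "ker_d1 de = {\<alpha> \<in> forms 1. CE_d de \<alpha> = zero_form}"

definition U1234 :: "form set" where
  "U1234 = {\<alpha> \<in> forms 1. \<forall>i. \<alpha> {i} \<noteq> 0 \<longrightarrow> i \<le> 4}"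

definition alg_a :: "nat \<Rightarrow> form" where
  "alg_a i = (if i = 5 then e2 1 2 else if i = 6 then e2 3 4 else zero_form)"
definition alg_b :: "nat \<Rightarrow> form" where
  "alg_b i = (if i = 5 then (\<lambda>T. e2 1 3 T + e2 4 2 T)
             else if i = 6 then (\<lambda>T. e2 1 4 T + e2 2 3 T) else zero_form)"
definition alg_c :: "nat \<Rightarrow> form" where
  "alg_c i = (if i = 5 then e2 1 2
             else if i = 6 then (\<lambda>T. e2 1 4 T + e2 2 3 T) else zero_form)"
definition alg_d :: "nat \<Rightarrow> form" where
  "alg_d i = (if i = 6 then (\<lambda>T. e2 1 2 T + e2 3 4 T) else zero_form)"

end

theory Submission
  imports Defs
begin

lemma wedge_inf: "\<not> finite T \<Longrightarrow> wedge a b T = 0"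
  by (simp add: wedge_def)
lemma sgn_nz[simp]: "sgn_shuffle A B \<noteq> 0"
  by (simp add: sgn_shuffle_def)
lemma wedge_mono_left: "finite T \<Longrightarrow> wedge (Defs.mono A) b T = (if A \<subseteq> T then sgn_shuffle A (T - A) * b (T - A) else 0)"
proof -
  assume fT: "finite T"
  have "wedge (Defs.mono A) b T = (\<Sum>X\<in>Pow T. if X = A then sgn_shuffle A (T - A) * b (T - A) else 0)"
    unfolding wedge_def Defs.mono_def by (rule sum.cong) auto
  also have "\<dots> = (if A \<subseteq> T then sgn_shuffle A (T - A) * b (T - A) else 0)"
    using fT by (subst sum.delta) auto
  finally show ?thesis .
qed
lemma wedge_mono_right: "finite T \<Longrightarrow> wedge a (Defs.mono B) T = (if B \<subseteq> T then sgn_shuffle (T - B) B * a (T - B) else 0)"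
proof -
  assume fT: "finite T"
  have "wedge a (Defs.mono B) T = (\<Sum>X\<in>Pow T. if X = T - B \<and> B \<subseteq> T then sgn_shuffle (T - B) B * a (T - B) else 0)"
    unfolding wedge_def Defs.mono_def by (rule sum.cong) auto
  also have "\<dots> = (if B \<subseteq> T then sgn_shuffle (T - B) B * a (T - B) else 0)"
    using fT by (cases "B \<subseteq> T") (simp_all add: sum.delta)
  finally show ?thesis .
qed


lemma LR_split: "i \<in> S \<Longrightarrow> {j\<in>S. j < i} \<union> {j\<in>S. i < j} = S - {(i::nat)}" by auto
lemma dterm_eq:
  fixes i :: nat
  assumes fT: "finite T"
  shows "wedge (Defs.mono {j\<in>S. j < i}) (wedge D (Defs.mono {j\<in>S. i < j})) T =
    (if S - {i} \<subseteq> T then sgn_shuffle {j\<in>S. j < i} (T - {j\<in>S. j < i}) *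
       sgn_shuffle (T - {j\<in>S. j < i} - {j\<in>S. i < j}) {j\<in>S. i < j} * D (T - (S - {i})) else 0)"
proof -
  have e: "T - {j\<in>S. j < i} - {j\<in>S. i < j} = T - (S - {i})" by auto
  have c: "({j\<in>S. j < i} \<subseteq> T \<and> {j\<in>S. i < j} \<subseteq> T - {j\<in>S. j < i}) = (S - {i} \<subseteq> T)"
    by (auto simp: subset_iff) (metis linorder_neqE_nat)
  show ?thesis
    using fT by (simp add: wedge_mono_left wedge_mono_right e c[symmetric])
qed

lemma d_mono_nz:
  assumes "d_mono de S T \<noteq> 0"
  shows "\<exists>i\<in>S. S - {i} \<subseteq> T \<and> de i (T - (S - {i})) \<noteq> 0"
proof -
  have fT: "finite T"
  proof (rule ccontr)
    assume "\<not> finite T"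
    hence "d_mono de S T = 0" by (simp add: d_mono_def wedge_inf)
    with assms show False by simp
  qed
  from assms obtain i where i: "i \<in> S" and nz:
    "(-1) ^ card {j\<in>S. j < i} * wedge (Defs.mono {j\<in>S. j < i}) (wedge (de i) (Defs.mono {j\<in>S. i < j})) T \<noteq> (0::real)"
    unfolding d_mono_def by (meson sum.not_neutral_contains_not_neutral)
  show ?thesis using nz i fT by (auto simp: dterm_eq split: if_splits)
qed

lemma d_mono_single:
  assumes fT: "finite T" and fS: "finite S" and i0: "i0 \<in> S"
    and oth: "\<And>i. i \<in> S \<Longrightarrow> i \<noteq> i0 \<Longrightarrow> S - {i} \<subseteq> T \<Longrightarrow> de i (T - (S - {i})) = 0"
    and sub: "S - {i0} \<subseteq> T" and nz: "de i0 (T - (S - {i0})) \<noteq> 0"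
  shows "d_mono de S T \<noteq> 0"
proof -
  let ?f = "\<lambda>i. (-1) ^ card {j\<in>S. j < i} * wedge (Defs.mono {j\<in>S. j < i}) (wedge (de i) (Defs.mono {j\<in>S. i < j})) T :: real"
  have "d_mono de S T = (\<Sum>i\<in>S. ?f i)" by (simp add: d_mono_def)
  also have "\<dots> = ?f i0"
  proof -
    have "(\<Sum>i\<in>S - {i0}. ?f i) = 0"
    proof (rule sum.neutral, rule ballI)
      fix i assume "i \<in> S - {i0}"
      thus "?f i = 0" using oth[of i] fT by (simp add: dterm_eq)
    qed
    thus ?thesis by (simp add: sum.remove[OF fS i0])
  qed
  finally show ?thesis using nz sub fT by (simp add: dterm_eq)
qed


lemma idx_eq: "idx = {1,2,3,4,5,6}" by (auto simp: idx_def)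

lemma CE_coeff:
  assumes rho: "\<rho> \<in> forms 3" and S0: "S0 \<subseteq> idx" and ii: "ii \<in> S0" and fT: "finite T"
    and uniq0: "\<And>i X. de i X \<noteq> 0 \<Longrightarrow> X \<subseteq> T \<Longrightarrow> insert i (T - X) \<subseteq> idx \<Longrightarrow> card (insert i (T - X)) = 3 \<Longrightarrow> i \<notin> T - X \<Longrightarrow> insert i (T - X) = S0 \<and> i = ii"
    and sub: "S0 - {ii} \<subseteq> T" and nz: "de ii (T - (S0 - {ii})) \<noteq> 0"
    and closed: "CE_d de \<rho> = zero_form"
  shows "\<rho> S0 = 0"
proof -
  have uniq: "S = S0 \<and> i = ii" if "S \<subseteq> idx" "card S = 3" "i \<in> S" "S - {i} \<subseteq> T" "de i (T - (S - {i})) \<noteq> 0" for S i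
  proof -
    have "S = insert i (T - (T - (S - {i})))" "T - (S - {i}) \<subseteq> T" "i \<notin> T - (T - (S - {i}))" using that by auto
    thus ?thesis using uniq0[of i "T - (S - {i})"] that by simp
  qed
  have fidx: "finite idx" by (simp add: idx_def)
  have fS0: "finite S0" using S0 fidx finite_subset by blast
  have c3: "card S0 = 3 \<or> \<rho> S0 = 0" using rho by (auto simp: forms_def)
  show ?thesis
  proof (cases "\<rho> S0 = 0")
    case True thus ?thesis .
  next
    case False
    hence cS0: "card S0 = 3" using c3 by simp
    have dnz: "d_mono de S0 T \<noteq> 0"
      apply (rule d_mono_single[OF fT fS0 ii])
      using uniq[of S0] S0 cS0 sub nz by auto
    have "CE_d de \<rho> T = (\<Sum>S\<in>Pow idx. \<rho> S * d_mono de S T)" by (simp add: CE_d_def)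
    also have "\<dots> = \<rho> S0 * d_mono de S0 T"
    proof -
      have "(\<Sum>S\<in>Pow idx - {S0}. \<rho> S * d_mono de S T) = 0"
      proof (rule sum.neutral, rule ballI)
        fix S assume S: "S \<in> Pow idx - {S0}"
        show "\<rho> S * d_mono de S T = 0"
        proof (rule ccontr)
          assume "\<rho> S * d_mono de S T \<noteq> 0"
          hence r: "\<rho> S \<noteq> 0" and d: "d_mono de S T \<noteq> 0" by auto
          from r rho have cS: "card S = 3" by (auto simp: forms_def)
          from d_mono_nz[OF d] obtain i where "i \<in> S" "S - {i} \<subseteq> T" "de i (T - (S - {i})) \<noteq> 0" by blast
          with uniq[of S i] S cS show False by auto
        qed
      qed
      moreover have "S0 \<in> Pow idx" using S0 by simp
      ultimately show ?thesis using fidx by (simp add: sum.remove)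
    qed
    finally have "\<rho> S0 * d_mono de S0 T = 0" using closed by (simp add: zero_form_def)
    with dnz show ?thesis by simp
  qed
qed

lemma e2_nz: "e2 a b X \<noteq> 0 \<Longrightarrow> X = {a, b}"
proof -
  assume h: "e2 a b X \<noteq> 0"
  hence "finite X" unfolding e2_def using wedge_inf by blast
  with h show ?thesis
    unfolding e2_def e1_def by (simp add: wedge_mono_left split: if_splits) (auto simp: Defs.mono_def split: if_splits)
qed

lemma e2_val: "a \<noteq> b \<Longrightarrow> e2 a b {a, b} \<noteq> 0"
  unfolding e2_def e1_def by (simp add: wedge_mono_left) (simp add: Defs.mono_def insert_Diff_if)

lemma helper: "S - {i} \<subseteq> T \<Longrightarrow> T - (S - {i}) = X \<Longrightarrow> i \<in> S \<Longrightarrow> S = insert i (T - X) \<and> X \<subseteq> T"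
  by auto

lemma alg_a_nz: "alg_a i X \<noteq> 0 \<Longrightarrow> (i = 5 \<and> X = {1,2}) \<or> (i = 6 \<and> X = {3,4})"
  by (auto simp: alg_a_def zero_form_def split: if_splits dest: e2_nz)
lemma add_nz: "(x::real) + y \<noteq> 0 \<Longrightarrow> x \<noteq> 0 \<or> y \<noteq> 0" by auto
lemma alg_b_nz: "alg_b i X \<noteq> 0 \<Longrightarrow> (i = 5 \<and> (X = {1,3} \<or> X = {4,2})) \<or> (i = 6 \<and> (X = {1,4} \<or> X = {2,3}))"
  unfolding alg_b_def zero_form_def
  by (auto split: if_splits dest!: add_nz) (auto dest: e2_nz)
lemma alg_c_nz: "alg_c i X \<noteq> 0 \<Longrightarrow> (i = 5 \<and> X = {1,2}) \<or> (i = 6 \<and> (X = {1,4} \<or> X = {2,3}))"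
  unfolding alg_c_def zero_form_def
  by (auto split: if_splits dest!: add_nz) (auto dest: e2_nz)
lemma alg_d_nz: "alg_d i X \<noteq> 0 \<Longrightarrow> (i = 6 \<and> (X = {1,2} \<or> X = {3,4}))"
  unfolding alg_d_def zero_form_def
  by (auto split: if_splits dest!: add_nz) (auto dest: e2_nz)

lemma test_uniq: "alg_b i X \<noteq> 0 \<Longrightarrow> X \<subseteq> {1,2,4,6} \<Longrightarrow> insert i ({1,2,4,6} - X) \<subseteq> idx \<Longrightarrow> card (insert i ({1,2,4,6} - X)) = 3 \<Longrightarrow> i \<notin> {1,2,4,6} - X \<Longrightarrow> insert i ({1,2,4,6} - X) = {1,5,6} \<and> i = 5"
  apply (drule alg_b_nz)
  apply (elim disjE conjE; hypsubst_thin; simp add: insert_Diff_if card_insert_if insert_commute)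
  done


lemma e2_eval: "e2 a b X = (if X = {a,b} \<and> a \<noteq> b then sgn_shuffle {a} {b} else 0)"
proof (cases "e2 a b X = 0")
  case True
  then show ?thesis using e2_val by auto
next
  case False
  hence X: "X = {a,b}" by (rule e2_nz)
  have ab: "a \<noteq> b"
  proof
    assume "a = b"
    hence "e2 a b X = 0" using X unfolding e2_def e1_def by (simp add: wedge_mono_left) (simp add: Defs.mono_def)
    with False show False by simp
  qed
  show ?thesis using X ab unfolding e2_def e1_def by (simp add: wedge_mono_left) (simp add: Defs.mono_def insert_Diff_if)
qed
lemma closed_a1: "\<rho> \<in> forms 3 \<Longrightarrow> CE_d alg_a \<rho> = zero_form \<Longrightarrow> \<rho> {1,5,6} = 0"
  apply (erule CE_coeff[where T="{1,3,4,5}" and ii=6 and de=alg_a])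
  apply (simp add: idx_eq)
  apply simp
  apply simp
  apply (drule alg_a_nz; elim disjE conjE; hypsubst_thin; simp add: insert_Diff_if card_insert_if insert_commute)
  apply (simp add: insert_Diff_if)
  apply (simp add: insert_Diff_if alg_a_def e2_eval zero_form_def doubleton_eq_iff)
  apply assumption
  done
lemma closed_a2: "\<rho> \<in> forms 3 \<Longrightarrow> CE_d alg_a \<rho> = zero_form \<Longrightarrow> \<rho> {2,5,6} = 0"
  apply (erule CE_coeff[where T="{2,3,4,5}" and ii=6 and de=alg_a])
  apply (simp add: idx_eq)
  apply simp
  apply simp
  apply (drule alg_a_nz; elim disjE conjE; hypsubst_thin; simp add: insert_Diff_if card_insert_if insert_commute)
  apply (simp add: insert_Diff_if)
  apply (simp add: insert_Diff_if alg_a_def e2_eval zero_form_def doubleton_eq_iff)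
  apply assumption
  done
lemma closed_a3: "\<rho> \<in> forms 3 \<Longrightarrow> CE_d alg_a \<rho> = zero_form \<Longrightarrow> \<rho> {3,5,6} = 0"
  apply (erule CE_coeff[where T="{1,2,3,6}" and ii=5 and de=alg_a])
  apply (simp add: idx_eq)
  apply simp
  apply simp
  apply (drule alg_a_nz; elim disjE conjE; hypsubst_thin; simp add: insert_Diff_if card_insert_if insert_commute)
  apply (simp add: insert_Diff_if)
  apply (simp add: insert_Diff_if alg_a_def e2_eval zero_form_def doubleton_eq_iff)
  apply assumption
  done
lemma closed_a4: "\<rho> \<in> forms 3 \<Longrightarrow> CE_d alg_a \<rho> = zero_form \<Longrightarrow> \<rho> {4,5,6} = 0"
  apply (erule CE_coeff[where T="{1,2,4,6}" and ii=5 and de=alg_a])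
  apply (simp add: idx_eq)
  apply simp
  apply simp
  apply (drule alg_a_nz; elim disjE conjE; hypsubst_thin; simp add: insert_Diff_if card_insert_if insert_commute)
  apply (simp add: insert_Diff_if)
  apply (simp add: insert_Diff_if alg_a_def e2_eval zero_form_def doubleton_eq_iff)
  apply assumption
  done
lemma closed_b1: "\<rho> \<in> forms 3 \<Longrightarrow> CE_d alg_b \<rho> = zero_form \<Longrightarrow> \<rho> {1,5,6} = 0"
  apply (erule CE_coeff[where T="{1,2,4,6}" and ii=5 and de=alg_b])
  apply (simp add: idx_eq)
  apply simp
  apply simp
  apply (drule alg_b_nz; elim disjE conjE; hypsubst_thin; simp add: insert_Diff_if card_insert_if insert_commute)
  apply (simp add: insert_Diff_if)
  apply (simp add: insert_Diff_if alg_b_def e2_eval zero_form_def doubleton_eq_iff)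
  apply assumption
  done
lemma closed_b2: "\<rho> \<in> forms 3 \<Longrightarrow> CE_d alg_b \<rho> = zero_form \<Longrightarrow> \<rho> {2,5,6} = 0"
  apply (erule CE_coeff[where T="{1,2,3,6}" and ii=5 and de=alg_b])
  apply (simp add: idx_eq)
  apply simp
  apply simp
  apply (drule alg_b_nz; elim disjE conjE; hypsubst_thin; simp add: insert_Diff_if card_insert_if insert_commute)
  apply (simp add: insert_Diff_if)
  apply (simp add: insert_Diff_if alg_b_def e2_eval zero_form_def doubleton_eq_iff)
  apply assumption
  done
lemma closed_b3: "\<rho> \<in> forms 3 \<Longrightarrow> CE_d alg_b \<rho> = zero_form \<Longrightarrow> \<rho> {3,5,6} = 0"
  apply (erule CE_coeff[where T="{2,3,4,6}" and ii=5 and de=alg_b])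
  apply (simp add: idx_eq)
  apply simp
  apply simp
  apply (drule alg_b_nz; elim disjE conjE; hypsubst_thin; simp add: insert_Diff_if card_insert_if insert_commute)
  apply (simp add: insert_Diff_if)
  apply (simp add: insert_Diff_if alg_b_def e2_eval zero_form_def doubleton_eq_iff)
  apply assumption
  done
lemma closed_b4: "\<rho> \<in> forms 3 \<Longrightarrow> CE_d alg_b \<rho> = zero_form \<Longrightarrow> \<rho> {4,5,6} = 0"
  apply (erule CE_coeff[where T="{1,3,4,6}" and ii=5 and de=alg_b])
  apply (simp add: idx_eq)
  apply simp
  apply simp
  apply (drule alg_b_nz; elim disjE conjE; hypsubst_thin; simp add: insert_Diff_if card_insert_if insert_commute)
  apply (simp add: insert_Diff_if)
  apply (simp add: insert_Diff_if alg_b_def e2_eval zero_form_def doubleton_eq_iff)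
  apply assumption
  done
lemma closed_c1: "\<rho> \<in> forms 3 \<Longrightarrow> CE_d alg_c \<rho> = zero_form \<Longrightarrow> \<rho> {1,5,6} = 0"
  apply (erule CE_coeff[where T="{1,2,3,5}" and ii=6 and de=alg_c])
  apply (simp add: idx_eq)
  apply simp
  apply simp
  apply (drule alg_c_nz; elim disjE conjE; hypsubst_thin; simp add: insert_Diff_if card_insert_if insert_commute)
  apply (simp add: insert_Diff_if)
  apply (simp add: insert_Diff_if alg_c_def e2_eval zero_form_def doubleton_eq_iff)
  apply assumption
  done
lemma closed_c2: "\<rho> \<in> forms 3 \<Longrightarrow> CE_d alg_c \<rho> = zero_form \<Longrightarrow> \<rho> {2,5,6} = 0"
  apply (erule CE_coeff[where T="{1,2,4,5}" and ii=6 and de=alg_c])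
  apply (simp add: idx_eq)
  apply simp
  apply simp
  apply (drule alg_c_nz; elim disjE conjE; hypsubst_thin; simp add: insert_Diff_if card_insert_if insert_commute)
  apply (simp add: insert_Diff_if)
  apply (simp add: insert_Diff_if alg_c_def e2_eval zero_form_def doubleton_eq_iff)
  apply assumption
  done
lemma closed_c3: "\<rho> \<in> forms 3 \<Longrightarrow> CE_d alg_c \<rho> = zero_form \<Longrightarrow> \<rho> {3,5,6} = 0"
  apply (erule CE_coeff[where T="{1,3,4,5}" and ii=6 and de=alg_c])
  apply (simp add: idx_eq)
  apply simp
  apply simp
  apply (drule alg_c_nz; elim disjE conjE; hypsubst_thin; simp add: insert_Diff_if card_insert_if insert_commute)
  apply (simp add: insert_Diff_if)
  apply (simp add: insert_Diff_if alg_c_def e2_eval zero_form_def doubleton_eq_iff)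
  apply assumption
  done
lemma closed_c4: "\<rho> \<in> forms 3 \<Longrightarrow> CE_d alg_c \<rho> = zero_form \<Longrightarrow> \<rho> {4,5,6} = 0"
  apply (erule CE_coeff[where T="{2,3,4,5}" and ii=6 and de=alg_c])
  apply (simp add: idx_eq)
  apply simp
  apply simp
  apply (drule alg_c_nz; elim disjE conjE; hypsubst_thin; simp add: insert_Diff_if card_insert_if insert_commute)
  apply (simp add: insert_Diff_if)
  apply (simp add: insert_Diff_if alg_c_def e2_eval zero_form_def doubleton_eq_iff)
  apply assumption
  done
lemma closed_d1: "\<rho> \<in> forms 3 \<Longrightarrow> CE_d alg_d \<rho> = zero_form \<Longrightarrow> \<rho> {1,5,6} = 0"
  apply (erule CE_coeff[where T="{1,3,4,5}" and ii=6 and de=alg_d])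
  apply (simp add: idx_eq)
  apply simp
  apply simp
  apply (drule alg_d_nz; elim disjE conjE; hypsubst_thin; simp add: insert_Diff_if card_insert_if insert_commute)
  apply (simp add: insert_Diff_if)
  apply (simp add: insert_Diff_if alg_d_def e2_eval zero_form_def doubleton_eq_iff)
  apply assumption
  done
lemma closed_d2: "\<rho> \<in> forms 3 \<Longrightarrow> CE_d alg_d \<rho> = zero_form \<Longrightarrow> \<rho> {2,5,6} = 0"
  apply (erule CE_coeff[where T="{2,3,4,5}" and ii=6 and de=alg_d])
  apply (simp add: idx_eq)
  apply simp
  apply simp
  apply (drule alg_d_nz; elim disjE conjE; hypsubst_thin; simp add: insert_Diff_if card_insert_if insert_commute)
  apply (simp add: insert_Diff_if)
  apply (simp add: insert_Diff_if alg_d_def e2_eval zero_form_def doubleton_eq_iff)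
  apply assumption
  done
lemma closed_d3: "\<rho> \<in> forms 3 \<Longrightarrow> CE_d alg_d \<rho> = zero_form \<Longrightarrow> \<rho> {3,5,6} = 0"
  apply (erule CE_coeff[where T="{1,2,3,5}" and ii=6 and de=alg_d])
  apply (simp add: idx_eq)
  apply simp
  apply simp
  apply (drule alg_d_nz; elim disjE conjE; hypsubst_thin; simp add: insert_Diff_if card_insert_if insert_commute)
  apply (simp add: insert_Diff_if)
  apply (simp add: insert_Diff_if alg_d_def e2_eval zero_form_def doubleton_eq_iff)
  apply assumption
  done
lemma closed_d4: "\<rho> \<in> forms 3 \<Longrightarrow> CE_d alg_d \<rho> = zero_form \<Longrightarrow> \<rho> {4,5,6} = 0"
  apply (erule CE_coeff[where T="{1,2,4,5}" and ii=6 and de=alg_d])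
  apply (simp add: idx_eq)
  apply simp
  apply simp
  apply (drule alg_d_nz; elim disjE conjE; hypsubst_thin; simp add: insert_Diff_if card_insert_if insert_commute)
  apply (simp add: insert_Diff_if)
  apply (simp add: insert_Diff_if alg_d_def e2_eval zero_form_def doubleton_eq_iff)
  apply assumption
  done



lemma interior_basis:
  "Defs.interior (basis_vec j) \<rho> A = (if j \<in> idx - A then (-1) ^ card {k\<in>A. k < j} * \<rho> (insert j A) else 0)"
proof -
  have "Defs.interior (basis_vec j) \<rho> A = (\<Sum>k\<in>idx - A. if k = j then (-1) ^ card {l\<in>A. l < j} * \<rho> (insert j A) else 0)"
    unfolding Defs.interior_def basis_vec_def by (rule sum.cong) auto
  also have "\<dots> = (if j \<in> idx - A then (-1) ^ card {k\<in>A. k < j} * \<rho> (insert j A) else 0)"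
    by (simp add: sum.delta' idx_def)
  finally show ?thesis .
qed

lemma K_expand: "K_mat \<rho> i j = (if i \<in> idx then (-1) ^ (i - 1) *
   (\<Sum>A\<in>Pow (idx - {i}). sgn_shuffle A (idx - {i} - A) * Defs.interior (basis_vec j) \<rho> A * \<rho> (idx - {i} - A)) else 0)"
  by (simp add: K_mat_def kappa_def wedge_def)

lemma setA: "i \<in> idx \<Longrightarrow> i \<le> 4 \<Longrightarrow> j \<in> {5,6::nat} \<Longrightarrow> A \<subseteq> idx - {i} \<Longrightarrow> j \<notin> A \<Longrightarrow>
   {5,6} \<subseteq> insert j A \<or> {5,6} \<subseteq> idx - {i} - A"
  unfolding idx_eq insert_iff empty_iff by (elim disjE; auto)

lemma K_zero:
  assumes P: "\<And>S. 5 \<in> S \<Longrightarrow> 6 \<in> S \<Longrightarrow> \<rho> S = 0" and i: "i \<in> idx" "i \<le> 4" and j: "j \<in> {5,6}"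
  shows "K_mat \<rho> i j = 0"
proof -
  have "\<And>A. A \<in> Pow (idx - {i}) \<Longrightarrow> Defs.interior (basis_vec j) \<rho> A * \<rho> (idx - {i} - A) = 0"
  proof -
    fix A assume A: "A \<in> Pow (idx - {i})"
    show "Defs.interior (basis_vec j) \<rho> A * \<rho> (idx - {i} - A) = 0"
    proof (cases "j \<in> A")
      case True thus ?thesis by (simp add: interior_basis)
    next
      case False
      from setA[OF i j _ False] A have "{5,6} \<subseteq> insert j A \<or> {5,6} \<subseteq> idx - {i} - A" by auto
      thus ?thesis using P[of "insert j A"] P[of "idx - {i} - A"] by (auto simp: interior_basis)
    qed
  qed
  hence "\<And>A. A \<in> Pow (idx - {i}) \<Longrightarrow> sgn_shuffle A (idx - {i} - A) * Defs.interior (basis_vec j) \<rho> A * \<rho> (idx - {i} - A) = 0"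
    by (simp add: mult.assoc)
  thus ?thesis unfolding K_expand by (simp add: sum.neutral)
qed

lemma setB: "i \<in> idx \<Longrightarrow> j \<in> idx \<Longrightarrow> (i \<le> 4 \<longleftrightarrow> j \<le> (4::nat)) \<Longrightarrow> A \<subseteq> idx - {i} \<Longrightarrow> j \<notin> A \<Longrightarrow>
   {5,6} \<subseteq> insert j A \<or> {5,6} \<subseteq> idx - {i} - A \<or>
   (((5 \<in> insert j A) \<noteq> (6 \<in> insert j A)) \<and> ((5 \<in> idx - {i} - A) \<noteq> (6 \<in> idx - {i} - A)))"
  unfolding idx_eq insert_iff empty_iff by (elim disjE; auto)

lemma K_eq:
  assumes P: "\<And>S. 5 \<in> S \<Longrightarrow> 6 \<in> S \<Longrightarrow> \<rho> S = 0" and Q: "\<And>S. 5 \<in> S \<Longrightarrow> 6 \<in> S \<Longrightarrow> \<sigma> S = 0"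
    and ag: "\<And>S. (5 \<in> S) \<noteq> (6 \<in> S) \<Longrightarrow> \<rho> S = \<sigma> S"
    and ij: "i \<in> idx" "j \<in> idx" "i \<le> 4 \<longleftrightarrow> j \<le> 4"
  shows "K_mat \<rho> i j = K_mat \<sigma> i j"
proof -
  have "\<And>A. A \<in> Pow (idx - {i}) \<Longrightarrow> Defs.interior (basis_vec j) \<rho> A * \<rho> (idx - {i} - A) = Defs.interior (basis_vec j) \<sigma> A * \<sigma> (idx - {i} - A)"
  proof -
    fix A assume A: "A \<in> Pow (idx - {i})"
    show "Defs.interior (basis_vec j) \<rho> A * \<rho> (idx - {i} - A) = Defs.interior (basis_vec j) \<sigma> A * \<sigma> (idx - {i} - A)"
    proof (cases "j \<in> A")
      case True thus ?thesis by (simp add: interior_basis)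
    next
      case False
      from setB[OF ij _ False] A consider "{5,6} \<subseteq> insert j A" | "{5,6} \<subseteq> idx - {i} - A" |
         "(5 \<in> insert j A) \<noteq> (6 \<in> insert j A)" "(5 \<in> idx - {i} - A) \<noteq> (6 \<in> idx - {i} - A)" by auto
      thus ?thesis
      proof cases
        case 1 thus ?thesis using P[of "insert j A"] Q[of "insert j A"] by (auto simp: interior_basis)
      next
        case 2 thus ?thesis using P[of "idx - {i} - A"] Q[of "idx - {i} - A"] by (auto simp: interior_basis)
      next
        case 3 thus ?thesis using ag[of "insert j A"] ag[of "idx - {i} - A"] by (auto simp: interior_basis)
      qed
    qed
  qed
  hence "\<And>A. A \<in> Pow (idx - {i}) \<Longrightarrow> sgn_shuffle A (idx - {i} - A) * Defs.interior (basis_vec j) \<rho> A * \<rho> (idx - {i} - A) = sgn_shuffle A (idx - {i} - A) * Defs.interior (basis_vec j) \<sigma> A * \<sigma> (idx - {i} - A)"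
    by (simp add: mult.assoc)
  thus ?thesis unfolding K_expand using sum.cong by (metis (no_types, lifting))
qed

lemma lambda_eq:
  assumes P: "\<And>S. 5 \<in> S \<Longrightarrow> 6 \<in> S \<Longrightarrow> \<rho> S = 0" and Q: "\<And>S. 5 \<in> S \<Longrightarrow> 6 \<in> S \<Longrightarrow> \<sigma> S = 0"
    and ag: "\<And>S. (5 \<in> S) \<noteq> (6 \<in> S) \<Longrightarrow> \<rho> S = \<sigma> S"
  shows "lambda_inv \<rho> = lambda_inv \<sigma>"
proof -
  have "\<And>i j. i \<in> idx \<Longrightarrow> j \<in> idx \<Longrightarrow> K_mat \<rho> i j * K_mat \<rho> j i = K_mat \<sigma> i j * K_mat \<sigma> j i"
  proof -
    fix i j assume ij: "i \<in> idx" "j \<in> idx"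
    show "K_mat \<rho> i j * K_mat \<rho> j i = K_mat \<sigma> i j * K_mat \<sigma> j i"
    proof (cases "i \<le> 4 \<longleftrightarrow> j \<le> 4")
      case True
      thus ?thesis using K_eq[OF P Q ag, where i=i and j=j] K_eq[OF P Q ag, where i=j and j=i] ij by auto
    next
      case False
      show ?thesis
      proof (cases "i \<le> 4")
        case True
        with False ij have "j \<in> {5,6}" by (auto simp: idx_def)
        thus ?thesis using K_zero[OF P ij(1) True] K_zero[OF Q ij(1) True] by simp
      next
        case F2: False
        with False ij have "i \<in> {5,6}" "j \<le> 4" by (auto simp: idx_def)
        thus ?thesis using K_zero[OF P ij(2)] K_zero[OF Q ij(2)] by simp
      qed
    qed
  qed
  thus ?thesis by (simp add: lambda_inv_def cong: sum.cong)
qed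



lemma mono_forms: "B \<subseteq> idx \<Longrightarrow> card B = k \<Longrightarrow> Defs.mono B \<in> forms k"
  by (auto simp: forms_def Defs.mono_def)

lemma hat_zero_B:
  assumes P: "\<And>S. 5 \<in> S \<Longrightarrow> 6 \<in> S \<Longrightarrow> \<rho> S = 0" and hat: "is_hat ori \<rho> \<rho>h"
    and B: "B \<subseteq> {1,2,3,4}" "card B = 3"
  shows "\<rho>h (idx - B) = 0"
proof -
  have Bi: "B \<subseteq> idx" using B by (auto simp: idx_def)
  have fidx: "finite idx" by (simp add: idx_def)
  have bf: "Defs.mono B \<in> forms 3" using mono_forms[OF Bi B(2)] .
  with hat have D: "((\<lambda>t. phi ori (\<lambda>S. \<rho> S + t * Defs.mono B S)) has_real_derivative
        top_coeff (wedge \<rho>h (Defs.mono B))) (at 0)" by (auto simp: is_hat_def)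
  have B0: "\<And>S. 5 \<in> S \<or> 6 \<in> S \<Longrightarrow> Defs.mono B S = 0" using B(1) by (auto simp: Defs.mono_def)
  have const: "(\<lambda>t. phi ori (\<lambda>S. \<rho> S + t * Defs.mono B S)) = (\<lambda>t. phi ori \<rho>)"
  proof
    fix t
    have "lambda_inv (\<lambda>S. \<rho> S + t * Defs.mono B S) = lambda_inv \<rho>"
      by (rule lambda_eq) (use P B0 in auto)
    thus "phi ori (\<lambda>S. \<rho> S + t * Defs.mono B S) = phi ori \<rho>" by (simp add: phi_def)
  qed
  have "top_coeff (wedge \<rho>h (Defs.mono B)) = 0"
    using D unfolding const using DERIV_const DERIV_unique by blast
  hence "sgn_shuffle (idx - B) B * \<rho>h (idx - B) = 0"
    using Bi fidx by (simp add: top_coeff_def wedge_mono_right)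
  thus ?thesis by simp
qed

lemma hat_P:
  assumes P: "\<And>S. 5 \<in> S \<Longrightarrow> 6 \<in> S \<Longrightarrow> \<rho> S = 0" and hat: "is_hat ori \<rho> \<rho>h"
  shows "\<And>S. 5 \<in> S \<Longrightarrow> 6 \<in> S \<Longrightarrow> \<rho>h S = 0"
proof (rule ccontr)
  fix S assume S: "5 \<in> S" "6 \<in> S" "\<rho>h S \<noteq> 0"
  have "\<rho>h \<in> forms 3" using hat by (simp add: is_hat_def)
  with S have Si: "S \<subseteq> idx" "card S = 3" by (auto simp: forms_def)
  have fidx: "finite idx" by (simp add: idx_def)
  have B: "idx - S \<subseteq> {1,2,3,4}" using S Si by (auto simp: idx_eq)
  have ci: "card idx = 6" by (simp add: idx_def)
  have "card (idx - S) = 3" using Si fidx card_Diff_subset[of S idx] ci finite_subset[OF Si(1) fidx] by simp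
  from hat_zero_B[OF P hat B this] have "\<rho>h (idx - (idx - S)) = 0" .
  moreover have "idx - (idx - S) = S" using Si by auto
  ultimately show False using S by simp
qed



lemma CE_concentrated:
  assumes de_nz: "\<And>i X. de i X \<noteq> 0 \<Longrightarrow> i \<in> {5,6} \<and> X \<subseteq> {1,2,3,4} \<and> card X = 2"
    and P: "\<And>S. 5 \<in> S \<Longrightarrow> 6 \<in> S \<Longrightarrow> \<omega> S = 0" and w: "\<omega> \<in> forms 3"
    and T: "T \<noteq> {1,2,3,4}"
  shows "CE_d de \<omega> T = 0"
proof (rule ccontr)
  assume "CE_d de \<omega> T \<noteq> 0"
  then obtain S where S: "S \<in> Pow idx" "\<omega> S * d_mono de S T \<noteq> 0"
    unfolding CE_d_def by (meson sum.not_neutral_contains_not_neutral)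
  hence wS: "\<omega> S \<noteq> 0" and dS: "d_mono de S T \<noteq> 0" by auto
  from wS w have cS: "card S = 3" by (auto simp: forms_def)
  from d_mono_nz[OF dS] obtain i where i: "i \<in> S" "S - {i} \<subseteq> T" "de i (T - (S - {i})) \<noteq> 0" by blast
  from de_nz[OF i(3)] have i56: "i \<in> {5,6}" and X: "T - (S - {i}) \<subseteq> {1,2,3,4}" "card (T - (S - {i})) = 2" by auto
  have notboth: "\<not> (5 \<in> S \<and> 6 \<in> S)" using P wS by blast
  have fS: "finite S" using S(1) by (auto simp: idx_def intro: finite_subset)
  have Sr: "S - {i} \<subseteq> {1,2,3,4}" using S(1) i56 notboth i(1) by (auto simp: idx_eq)
  have cSr: "card (S - {i}) = 2" using cS i(1) fS by simp
  have Teq: "T = (S - {i}) \<union> (T - (S - {i}))" using i(2) by auto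
  have Tsub: "T \<subseteq> {1,2,3,4}" using Sr X(1) Teq by blast
  have fT: "finite T" using Tsub finite_subset by blast
  have "card T = 4"
  proof -
    have "card T = card (S - {i}) + card (T - (S - {i}))"
      using Teq fT fS card_Un_disjoint[of "S - {i}" "T - (S - {i})"] by (metis Diff_disjoint finite_Diff finite_subset i(2))
    thus ?thesis using cSr X(2) by simp
  qed
  hence "T = {1,2,3,4}" using Tsub by (intro card_subset_eq) auto
  with T show False by simp
qed

lemma wedge_mono_mono:
  assumes "A \<inter> B = {}" "finite A" "finite B"
  shows "wedge (Defs.mono A) (\<lambda>T. c * Defs.mono B T) = (\<lambda>T. (c * sgn_shuffle A B) * Defs.mono (A \<union> B) T)"
proof
  fix T
  show "wedge (Defs.mono A) (\<lambda>T. c * Defs.mono B T) T = c * sgn_shuffle A B * Defs.mono (A \<union> B) T"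
  proof (cases "finite T")
    case False
    thus ?thesis using assms by (auto simp: wedge_inf Defs.mono_def)
  next
    case True
    have w: "wedge (Defs.mono A) (\<lambda>T. c * Defs.mono B T) T = (if A \<subseteq> T then sgn_shuffle A (T - A) * (c * Defs.mono B (T - A)) else 0)"
      by (rule wedge_mono_left[OF True])
    show ?thesis
    proof (cases "T = A \<union> B")
      case True
      hence "T - A = B" "A \<subseteq> T" using assms by auto
      thus ?thesis using w True by (simp add: Defs.mono_def)
    next
      case False
      hence "\<not> (A \<subseteq> T \<and> T - A = B)" by auto
      thus ?thesis using w False by (auto simp: Defs.mono_def)
    qed
  qed
qed

lemma wl4: "\<exists>s. s \<noteq> 0 \<and> wedge_list (map (\<lambda>l. e1 (l + 1)) [0..<4]) = (\<lambda>T. s * Defs.mono {1,2,3,4} T)"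
proof -
  have m: "map (\<lambda>l. e1 (l + 1)) [0..<4] = [e1 1, e1 2, e1 3, e1 4]" by (simp add: upt_rec eval_nat_numeral)
  have a: "Defs.mono {} = (\<lambda>T. 1 * Defs.mono {} T)" by simp
  have "wedge_list [e1 1, e1 2, e1 3, e1 4] = (\<lambda>T. (((1 * sgn_shuffle {4} {}) * sgn_shuffle {3} {4}) * sgn_shuffle {2} {3,4} * sgn_shuffle {1} {2,3,4}) * Defs.mono {1,2,3,4} T)"
    apply (simp only: wedge_list.simps e1_def)
    apply (subst a)
    apply (subst wedge_mono_mono, simp_all)
    apply (subst wedge_mono_mono, simp_all)
    apply (subst wedge_mono_mono, simp_all)
    apply (subst wedge_mono_mono, simp_all)
    apply (simp add: insert_commute)
    done
  thus ?thesis using m by (intro exI[of _ "(((1 * sgn_shuffle {4} {}) * sgn_shuffle {3} {4}) * sgn_shuffle {2} {3,4} * sgn_shuffle {1} {2,3,4})"]) simp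
qed

lemma main_gen:
  assumes de_nz: "\<And>i X. de i X \<noteq> 0 \<Longrightarrow> i \<in> {5,6} \<and> X \<subseteq> {1,2,3,4} \<and> card X = 2"
    and P: "\<And>S. 5 \<in> S \<Longrightarrow> 6 \<in> S \<Longrightarrow> \<rho> S = 0" and hat: "is_hat ori \<rho> \<rho>h"
    and U: "\<And>k. k \<in> {1,2,3,4} \<Longrightarrow> e1 k \<in> U"
  shows "CE_d de \<rho>h \<in> lam_sub 4 U"
proof -
  have Ph: "\<And>S. 5 \<in> S \<Longrightarrow> 6 \<in> S \<Longrightarrow> \<rho>h S = 0" using hat_P[OF P hat] .
  have wh: "\<rho>h \<in> forms 3" using hat by (simp add: is_hat_def)
  obtain s where s: "s \<noteq> 0" "wedge_list (map (\<lambda>l. e1 (l + 1)) [0..<4]) = (\<lambda>T. s * Defs.mono {1,2,3,4} T)"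
    using wl4 by blast
  define cc where "cc = CE_d de \<rho>h {1,2,3,4}"
  have eq: "CE_d de \<rho>h = (\<lambda>T. \<Sum>m<(1::nat). (\<lambda>m. cc / s) m * wedge_list (map ((\<lambda>m l. e1 (l + 1)) m) [0..<4]) T)"
  proof
    fix T
    show "CE_d de \<rho>h T = (\<Sum>m<(1::nat). (\<lambda>m. cc / s) m * wedge_list (map ((\<lambda>m l. e1 (l + 1)) m) [0..<4]) T)"
    proof (cases "T = {1,2,3,4}")
      case True thus ?thesis using s by (simp add: cc_def Defs.mono_def)
    next
      case False thus ?thesis using s CE_concentrated[OF de_nz Ph wh False] by (simp add: Defs.mono_def)
    qed
  qed
  have all: "\<forall>m<(1::nat). \<forall>l<4. (\<lambda>m l. e1 (l + 1)) m l \<in> U"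
  proof (intro allI impI)
    fix m l :: nat assume "l < 4"
    hence "l + 1 \<in> {1,2,3,4}" by auto
    thus "(\<lambda>m l. e1 (l + 1)) m l \<in> U" using U by simp
  qed
  show ?thesis unfolding lam_sub_def
    apply (rule CollectI)
    apply (rule exI[of _ "1::nat"], rule exI[of _ "\<lambda>m. cc / s"], rule exI[of _ "\<lambda>m l. e1 (l + 1)"])
    apply (rule conjI)
     apply (rule all)
    apply (rule eq)
    done
qed



lemma S56:
  assumes "S \<subseteq> idx" "card S = 3" "5 \<in> S" "6 \<in> S"
  shows "S = {1,5,6} \<or> S = {2,5,6} \<or> S = {3,5,6} \<or> S = {4,5,6}"
proof -
  have fS: "finite S" using assms(1) by (auto simp: idx_def intro: finite_subset)
  have "card (S - {5,6}) = 1" using assms fS by (simp add: card_Diff_subset)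
  then obtain k where k: "S - {5,6} = {k}" by (auto simp: card_Suc_eq)
  hence S: "S = {k,5,6}" using assms by auto
  have "k \<in> idx" "k \<noteq> 5" "k \<noteq> 6" using k assms by auto
  hence "k \<in> {1,2,3,4}" by (auto simp: idx_eq)
  thus ?thesis using S by auto
qed

lemma P_from:
  assumes w: "\<rho> \<in> forms 3" and c: "\<And>k. k \<in> {1,2,3,4} \<Longrightarrow> \<rho> {k,5,6} = 0"
  shows "\<And>S. 5 \<in> S \<Longrightarrow> 6 \<in> S \<Longrightarrow> \<rho> S = 0"
proof (rule ccontr)
  fix S assume S: "5 \<in> S" "6 \<in> S" "\<rho> S \<noteq> 0"
  hence "S \<subseteq> idx" "card S = 3" using w by (auto simp: forms_def)
  from S56[OF this S(1,2)] c S(3) show False by auto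
qed

lemma e1_forms: "k \<in> {1,2,3,4} \<Longrightarrow> e1 k \<in> forms 1"
  by (auto simp: e1_def forms_def Defs.mono_def idx_def)

lemma e1_ker:
  assumes de_nz: "\<And>i X. de i X \<noteq> 0 \<Longrightarrow> i \<in> {5,6} \<and> X \<subseteq> {1,2,3,4} \<and> card X = 2"
    and k: "k \<in> {1,2,3,4}"
  shows "e1 k \<in> ker_d1 de"
proof -
  have "CE_d de (e1 k) T = 0" for T
  proof -
    have hh: "\<And>S. S \<in> Pow idx \<Longrightarrow> e1 k S * d_mono de S T = 0"
    proof (rule ccontr)
      fix S assume "S \<in> Pow idx" "e1 k S * d_mono de S T \<noteq> 0"
      hence S: "S = {k}" "d_mono de S T \<noteq> 0" by (auto simp: e1_def Defs.mono_def split: if_splits)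
      from d_mono_nz[OF S(2)] obtain i where "i \<in> S" "de i (T - (S - {i})) \<noteq> 0" by blast
      hence "i \<in> {5,6}" "i \<in> S" using de_nz by blast+
      with S(1) k show False by auto
    qed
    show ?thesis unfolding CE_d_def using hh by (intro sum.neutral) blast
  qed
  thus ?thesis using e1_forms[OF k] by (auto simp: ker_d1_def zero_form_def)
qed

lemma e1_U: "k \<in> {1,2,3,4} \<Longrightarrow> e1 k \<in> U1234"
  using e1_forms by (auto simp: U1234_def e1_def Defs.mono_def split: if_splits)

lemma nz_a: "alg_a i X \<noteq> 0 \<Longrightarrow> i \<in> {5,6} \<and> X \<subseteq> {1,2,3,4} \<and> card X = 2"
  by (drule alg_a_nz) auto
lemma nz_b: "alg_b i X \<noteq> 0 \<Longrightarrow> i \<in> {5,6} \<and> X \<subseteq> {1,2,3,4} \<and> card X = 2"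
  by (drule alg_b_nz) auto
lemma nz_c: "alg_c i X \<noteq> 0 \<Longrightarrow> i \<in> {5,6} \<and> X \<subseteq> {1,2,3,4} \<and> card X = 2"
  by (drule alg_c_nz) auto
lemma nz_d: "alg_d i X \<noteq> 0 \<Longrightarrow> i \<in> {5,6} \<and> X \<subseteq> {1,2,3,4} \<and> card X = 2"
  by (drule alg_d_nz) auto

theorem lemma4p1:
  shows "(\<forall>de \<in> {alg_a, alg_b, alg_c}. \<forall>\<rho> ori \<rho>h.
            \<rho> \<in> forms 3 \<and> CE_d de \<rho> = zero_form \<and> stable \<rho> \<and>
            ori \<in> {1, -1} \<and> is_hat ori \<rho> \<rho>h
              \<longrightarrow> CE_d de \<rho>h \<in> lam_sub 4 (ker_d1 de))
       \<and> (\<forall>\<rho> ori \<rho>h.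
            \<rho> \<in> forms 3 \<and> CE_d alg_d \<rho> = zero_form \<and> stable \<rho> \<and>
            ori \<in> {1, -1} \<and> is_hat ori \<rho> \<rho>h
              \<longrightarrow> CE_d alg_d \<rho>h \<in> lam_sub 4 U1234)"
proof (intro conjI ballI allI impI)
  fix de \<rho> ori \<rho>h
  assume de: "de \<in> {alg_a, alg_b, alg_c}" and h: "\<rho> \<in> forms 3 \<and> CE_d de \<rho> = zero_form \<and> stable \<rho> \<and> ori \<in> {1, -1} \<and> is_hat ori \<rho> \<rho>h"
  hence w: "\<rho> \<in> forms 3" and cl: "CE_d de \<rho> = zero_form" and hat: "is_hat ori \<rho> \<rho>h" by auto
  from de show "CE_d de \<rho>h \<in> lam_sub 4 (ker_d1 de)"
  proof (elim insertE emptyE)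
    assume dea: "de = alg_a"
    have P: "\<And>S. 5 \<in> S \<Longrightarrow> 6 \<in> S \<Longrightarrow> \<rho> S = 0"
      by (rule P_from[OF w]) (use closed_a1 closed_a2 closed_a3 closed_a4 w cl dea in auto)
    show ?thesis unfolding dea using main_gen[OF nz_a P hat e1_ker[OF nz_a]] by simp
  next
    assume deb: "de = alg_b"
    have P: "\<And>S. 5 \<in> S \<Longrightarrow> 6 \<in> S \<Longrightarrow> \<rho> S = 0"
      by (rule P_from[OF w]) (use closed_b1 closed_b2 closed_b3 closed_b4 w cl deb in auto)
    show ?thesis unfolding deb using main_gen[OF nz_b P hat e1_ker[OF nz_b]] by simp
  next
    assume dec: "de = alg_c"
    have P: "\<And>S. 5 \<in> S \<Longrightarrow> 6 \<in> S \<Longrightarrow> \<rho> S = 0"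
      by (rule P_from[OF w]) (use closed_c1 closed_c2 closed_c3 closed_c4 w cl dec in auto)
    show ?thesis unfolding dec using main_gen[OF nz_c P hat e1_ker[OF nz_c]] by simp
  qed
next
  fix \<rho> ori \<rho>h
  assume h: "\<rho> \<in> forms 3 \<and> CE_d alg_d \<rho> = zero_form \<and> stable \<rho> \<and> ori \<in> {1, -1} \<and> is_hat ori \<rho> \<rho>h"
  hence w: "\<rho> \<in> forms 3" and cl: "CE_d alg_d \<rho> = zero_form" and hat: "is_hat ori \<rho> \<rho>h" by auto
  have P: "\<And>S. 5 \<in> S \<Longrightarrow> 6 \<in> S \<Longrightarrow> \<rho> S = 0"
    by (rule P_from[OF w]) (use closed_d1 closed_d2 closed_d3 closed_d4 w cl in auto)
  show "CE_d alg_d \<rho>h \<in> lam_sub 4 U1234" using main_gen[OF nz_d P hat e1_U] by simp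
qed

end
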